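(* For every integer $k\ge 2$, the smallest $k$-admissible number is $2^{\binom{k}{2}+\nu_2(k)}$.
   Context: $\nu_2(x)$ denotes the 2-adic valuation of a positive integer $x$. For an integer $k\ge 1$, an integer $n$ is called $k$-admissible if $n>k$ and $\binom{n}{k}$ is divisible by $2^{\binom{k}{2}}$. *)

theory Defs
  imports "HOL-Computational_Algebra.Primes"
begin

definition nu2 :: "nat \<Rightarrow> nat" where
  "nu2 x = multiplicity (2::nat) x"

definition k_admissible :: "nat \<Rightarrow> nat \<Rightarrow> bool" where
  "k_admissible k n \<longleftrightarrow> n > k \<and> 2 ^ (k choose 2) dvd (n choose k)"

end

theory Submission
  imports Defs
begin

lemma nu2_mult: "x \<noteq> 0 \<Longrightarrow> y \<noteq> 0 \<Longrightarrow> nu2 (x * y) = nu2 x + nu2 y"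
  unfolding nu2_def by (rule prime_elem_multiplicity_mult_distrib) auto

lemma nu2_two: "nu2 2 = 1"
  unfolding nu2_def by (rule multiplicity_self) auto

lemma nu2_pow: "nu2 (2 ^ m) = m"
  unfolding nu2_def by (rule multiplicity_same_power) auto

lemma nu2_double: "x \<noteq> 0 \<Longrightarrow> nu2 (2 * x) = Suc (nu2 x)"
  using nu2_mult[of 2 x] nu2_two by simp

lemma nu2_odd: "nu2 (2 * x + 1) = 0"
  unfolding nu2_def by (rule not_dvd_imp_multiplicity_0) presburger

definition F :: "nat \<Rightarrow> nat" where "F n = nu2 (fact n)"

lemma F_Suc: "F (Suc n) = nu2 (Suc n) + F n"
  unfolding F_def fact_Suc of_nat_id by (rule nu2_mult) auto

lemma F_0: "F 0 = 0"
  unfolding F_def nu2_def by simp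

lemma F_even: "F (2 * a) = a + F a \<and> F (2 * a + 1) = a + F a"
proof (induction a)
  case 0 then show ?case by (simp add: F_0 F_Suc nu2_def)
next
  case (Suc a)
  have e1: "F (2 * Suc a) = nu2 (2 * Suc a) + nu2 (2*a+1) + F (2*a)"
    using F_Suc[of "2*a+1"] F_Suc[of "2*a"] by (simp add: add.commute)
  have "nu2 (2 * Suc a) = Suc (nu2 (Suc a))" by (rule nu2_double) simp
  then have e2: "F (2 * Suc a) = Suc a + F (Suc a)"
    using e1 Suc.IH nu2_odd[of a] F_Suc[of a] by simp
  moreover have "F (2 * Suc a + 1) = Suc a + F (Suc a)"
    using F_Suc[of "2 * Suc a"] e2 nu2_odd[of "Suc a"] by simp
  ultimately show ?case by simp
qed

lemma F_binom: "k \<le> n \<Longrightarrow> F n = nu2 (n choose k) + F k + F (n - k)"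
proof -
  assume kn: "k \<le> n"
  have "fact k * fact (n - k) * (n choose k) = (fact n :: nat)" by (rule binomial_fact_lemma[OF kn])
  then have "F n = nu2 (fact k * fact (n - k) * (n choose k))" by (simp add: F_def)
  also have "\<dots> = F k + F (n - k) + nu2 (n choose k)"
    using kn by (simp add: nu2_mult F_def)
  finally show ?thesis by simp
qed

lemma F_half: "F n = n div 2 + F (n div 2)"
proof -
  obtain a r where "n = 2 * a + r" "r < 2" "a = n div 2" by (metis div_mult_mod_eq mod_less_divisor zero_less_numeral mult.commute)
  then show ?thesis using F_even[of a] by (cases r) auto
qed

lemma key: "1 \<le> k \<Longrightarrow> k \<le> n \<Longrightarrow> 2 ^ (nu2 (n choose k) + nu2 k) \<le> n"
proof (induction n arbitrary: k rule: less_induct)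
  case (less n)
  define a where "a = n div 2"
  define c where "c = k div 2"
  have n2: "n = 2 * a + n mod 2" "k = 2 * c + k mod 2" unfolding a_def c_def by auto
  have ca: "c \<le> a" unfolding a_def c_def using less.prems by (simp add: div_le_mono)
  have Fn: "F n = a + F a" "F k = c + F c" unfolding a_def c_def by (rule F_half)+
  have B1: "F n = nu2 (n choose k) + F k + F (n - k)" using F_binom less.prems by simp
  show ?case
  proof (cases "even k")
    case True
    then have k2: "k = 2 * c" unfolding c_def by simp
    then have c1: "c \<ge> 1" using less.prems by simp
    have nk: "(n - k) div 2 = a - c" using n2 k2 by (cases "even n") auto
    have Fnk: "F (n - k) = (a - c) + F (a - c)" using F_half[of "n-k"] nk by simp
    have B2: "F a = nu2 (a choose c) + F c + F (a - c)" using F_binom ca by simp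
    have v: "nu2 (n choose k) = nu2 (a choose c)" using B1 B2 Fn Fnk ca by linarith
    have vk: "nu2 k = Suc (nu2 c)" using k2 c1 nu2_double by simp
    have "a < n" using a_def c1 ca by simp
    then have IH: "2 ^ (nu2 (a choose c) + nu2 c) \<le> a" using less.IH c1 ca by blast
    have "2 ^ (nu2 (n choose k) + nu2 k) = 2 * 2 ^ (nu2 (a choose c) + nu2 c)" using v vk by simp
    also have "\<dots> \<le> n" using IH n2 by linarith
    finally show ?thesis .
  next
    case False
    then have k2: "k = 2 * c + 1" unfolding c_def by simp
    have vk: "nu2 k = 0" using k2 nu2_odd by simp
    show ?thesis
    proof (cases "even n")
      case False
      then have nn: "n = 2 * a + 1" unfolding a_def by simp
      have nk: "n - k = 2 * (a - c)" using nn k2 by simp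
      have Fnk: "F (n - k) = (a - c) + F (a - c)" using F_even[of "a-c"] nk by simp
      have B2: "F a = nu2 (a choose c) + F c + F (a - c)" using F_binom ca by simp
      have v: "nu2 (n choose k) = nu2 (a choose c)" using B1 B2 Fn Fnk ca by linarith
      show ?thesis
      proof (cases "c = 0")
        case True then show ?thesis using v vk nn by (simp add: nu2_def)
      next
        case False
        have "a < n" using nn by simp
        then have IH: "2 ^ (nu2 (a choose c) + nu2 c) \<le> a" using less.IH[of a c] False ca by simp
        have "2 ^ (nu2 (n choose k) + nu2 k) \<le> (2::nat) ^ (nu2 (a choose c) + nu2 c)" using v vk
          by (intro power_increasing) auto
        then show ?thesis using IH nn by linarith
      qed
    next
      case True
      then have nn: "n = 2 * a" unfolding a_def by simp
      have ca': "c < a" using nn k2 less.prems by simp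
      have nk: "n - k = 2 * (a - c - 1) + 1" using nn k2 ca' by simp
      have Fnk: "F (n - k) = (a - c - 1) + F (a - c - 1)" using F_even[of "a-c-1"] nk by simp
      have Fa: "F a = nu2 a + F (a - 1)" using F_Suc[of "a - 1"] ca' by simp
      have Fac: "F (a - c) = nu2 (a - c) + F (a - c - 1)" using F_Suc[of "a - c - 1"] ca'
        by (simp add: Suc_diff_Suc)
      have B2: "F a = nu2 (a choose c) + F c + F (a - c)" using F_binom ca by simp
      have "c \<le> a - 1" using ca' by simp
      then have B3: "F (a - 1) = nu2 (a - 1 choose c) + F c + F (a - 1 - c)" by (rule F_binom)
      have ee: "a - 1 - c = a - c - 1" by simp
      have v: "nu2 (n choose k) = 1 + nu2 (a choose c) + nu2 (a - c)"
        using B1 B2 B3 Fn Fnk Fa Fac ca' ee by linarith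
      have "a < n" using nn ca' by simp
      moreover have "1 \<le> a - c" "a - c \<le> a" using ca' by auto
      ultimately have IH: "2 ^ (nu2 (a choose (a - c)) + nu2 (a - c)) \<le> a" using less.IH[of a "a - c"] by simp
      have "a choose (a - c) = a choose c" using binomial_symmetric[OF ca] by simp
      then have "2 ^ (nu2 (n choose k) + nu2 k) = (2::nat) * 2 ^ (nu2 (a choose (a - c)) + nu2 (a - c))"
        using v vk by simp
      then show ?thesis using IH nn by linarith
    qed
  qed
qed

theorem mainTheorem2:
  fixes k :: nat
  assumes "k \<ge> 2"
  shows "k_admissible k (2 ^ ((k choose 2) + nu2 k)) \<and>
         (\<forall>n. k_admissible k n \<longrightarrow> 2 ^ ((k choose 2) + nu2 k) \<le> n)"
proof
  define m where "m = (k choose 2) + nu2 k"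
  define N where "N = (2::nat) ^ m"
  have big: "N > k"
  proof (cases "k = 2")
    case True then show ?thesis by (simp add: N_def m_def nu2_two)
  next
    case False
    then have k3: "k \<ge> 3" using assms by simp
    have "k * (k - 1) \<ge> k * 2" using k3 by simp
    then have "k * (k - 1) div 2 \<ge> k * 2 div 2" by (rule div_le_mono)
    then have "k choose 2 \<ge> k" by (simp add: choose_two) 
    then have "m \<ge> k" unfolding m_def by simp
    then have "N \<ge> 2 ^ k" unfolding N_def by (simp add: power_increasing)
    moreover have "k < 2 ^ k" by (rule less_exp)
    ultimately show ?thesis by linarith
  qed
  have abs: "k * (N choose k) = N * ((N - 1) choose (k - 1))"
    using binomial_absorption[of "k - 1" N] assms by simp
  have nz1: "N choose k \<noteq> 0" using big by simp
  have nz2: "(N - 1) choose (k - 1) \<noteq> 0" using big by simp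
  have "nu2 k + nu2 (N choose k) = m + nu2 ((N - 1) choose (k - 1))"
  proof -
    have "k \<noteq> 0" using assms by simp
    then have e1: "nu2 (k * (N choose k)) = nu2 k + nu2 (N choose k)" using nz1 by (rule nu2_mult)
    have "N \<noteq> 0" unfolding N_def by simp
    then have e2: "nu2 (N * ((N - 1) choose (k - 1))) = nu2 N + nu2 ((N - 1) choose (k - 1))"
      using nz2 by (rule nu2_mult)
    have e3: "nu2 N = m" unfolding N_def by (rule nu2_pow)
    show ?thesis using e1 e2 e3 abs by simp
  qed
  then have "(k choose 2) \<le> nu2 (N choose k)" unfolding m_def by linarith
  then have "2 ^ (k choose 2) dvd (N choose k)" unfolding nu2_def using power_dvd_iff_le_multiplicity[where p=2 and x="N choose k" and n="k choose 2"] nz1 by simp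
  then show "k_admissible k (2 ^ ((k choose 2) + nu2 k))"
    using big unfolding k_admissible_def m_def[symmetric] N_def[symmetric] by simp
  show "\<forall>n. k_admissible k n \<longrightarrow> 2 ^ ((k choose 2) + nu2 k) \<le> n"
  proof (intro allI impI)
    fix n assume "k_admissible k n"
    then have kn: "k < n" and d: "2 ^ (k choose 2) dvd (n choose k)" unfolding k_admissible_def by auto
    have "(k choose 2) \<le> nu2 (n choose k)" using d kn unfolding nu2_def using power_dvd_iff_le_multiplicity[where p=2 and x="n choose k" and n="k choose 2"] by simp
    then have "2 ^ ((k choose 2) + nu2 k) \<le> (2::nat) ^ (nu2 (n choose k) + nu2 k)" by simp
    also have "\<dots> \<le> n" using key[of k n] kn assms by simp
    finally show "2 ^ ((k choose 2) + nu2 k) \<le> n" .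
  qed
qed

end
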